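(* Let $N\ge 2$ and $d_0,\dots,d_N,p_1,\dots,p_N,q_0,\dots,q_N\ge 1$ be integers, $d=\sum_{i=0}^N d_i$, $p=\sum_{i=1}^N p_i$. Let $\mathcal{X}_i\subset\mathbb{R}^{d_i}$ ($0\le i\le N$), $\mathcal{X}=\prod_{i=0}^N\mathcal{X}_i$, $\mathcal{Y}_i\subset\mathbb{R}^{p_i}$ ($1\le i\le N$), and $\mathcal{Y}=\prod_{i=1}^N\mathcal{Y}_i\subset\mathbb{R}^p$, and assume $\mathcal{Y}$ is convex and compact. Write $\mathbf{x}=(\mathbf{x}_0,\dots,\mathbf{x}_N)$, $\mathbf{y}=(\mathbf{y}_1,\dots,\mathbf{y}_N)$, $\mathbf{y}_{-i}=(\mathbf{y}_j)_{j\ne i}$, $\mathcal{Y}_{-i}=\prod_{j\ne i}\mathcal{Y}_j$. Let $f:\mathcal{X}\to\mathbb{R}$, $g_0:\mathcal{X}\to\mathbb{R}^{q_0}$, $g_i:\mathcal{X}_0\times\mathcal{X}_i\to\mathbb{R}^{q_i}$, and $g(\mathbf{x})=(g_0(\mathbf{x}),g_1(\mathbf{x}_0,\mathbf{x}_1),\dots,g_N(\mathbf{x}_0,\mathbf{x}_N))$. Let $h_i:\mathcal{X}_0\times\mathcal{X}_i\times\mathcal{Y}_{-i}\to\mathcal{Y}_i$ ($1\le i\le N$) and $h(\mathbf{x},\mathbf{y})=(h_i(\mathbf{x}_0,\mathbf{x}_i,\mathbf{y}_{-i}))_i\in\mathcal{Y}$, and assume that for every $\mathbf{x}\in\mathcal{X}$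 the map $\mathbf{y}\mapsto h(\mathbf{x},\mathbf{y})$ is continuous on $\mathcal{Y}$. Let $\mathcal{S}=\{(\mathbf{x},\mathbf{y})\in\mathcal{X}\times\mathcal{Y}:\mathbf{y}=h(\mathbf{x},\mathbf{y})\}$. Let $L:\mathcal{X}\times\mathcal{Y}\to\mathbb{R}^d$ satisfy $L(\mathbf{x},\mathbf{y})=\mathbf{x}$ for all $(\mathbf{x},\mathbf{y})\in\mathcal{S}$, with $\tilde f=f\circ L$, $\tilde g=g\circ L$ defined on $\mathcal{X}\times\mathcal{Y}$. Consider (P): minimize $f(\mathbf{x})$ subject to $g_0(\mathbf{x})\le0$, $g_i(\mathbf{x}_0,\mathbf{x}_i)\le 0$ ($1\le i\le N$); and (MDO): minimize $\tilde f(\mathbf{x},\mathbf{y})$ over $(\mathbf{x},\mathbf{y})\in\mathcal{X}\times\mathcal{Y}$ subject to $\tilde g(\mathbf{x},\mathbf{y})\le 0$ and $\mathbf{y}_i=h_i(\mathbf{x}_0,\mathbf{x}_i,\mathbf{y}_{-i})$ ($1\le i\le N$). Then solving (MDO) on $\mathcal{X}\times\mathcal{Y}$ is equivalent to solving (P) on $\mathcal{X}$: a pair $(\mathbf{x},\mathbf{y})\in\mathcal{X}\times\mathcal{Y}$ is a solution of (MDO) if and only if $(\mathbf{x},\mathbf{y})\in\mathcal{S}$ and $\mathbf{x}$ is a solution of (P) over $\mathcal{X}$. Furthermore, these solutions do not depend on $L$.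
   Context: "Solution" means a global minimizer among feasible points; inequalities are componentwise. *)

theory Defs
  imports "HOL-Analysis.Analysis"
begin

text \<open>Vectors of R^n are represented as functions nat => real vanishing from index n on.
  Block vectors (x_0,...,x_N) are functions nat => (nat => real); blocks outside the
  index set are the zero vector.  The topology is the (product) topology of functions,
  which on these finite-dimensional carriers is the Euclidean one.\<close>

definition Rn :: "nat \<Rightarrow> (nat \<Rightarrow> real) set" where
  "Rn n = {v. \<forall>j\<ge>n. v j = 0}"

definition zvec :: "nat \<Rightarrow> real" where
  "zvec = (\<lambda>_. 0)"

definition blockprod :: "nat set \<Rightarrow> (nat \<Rightarrow> (nat \<Rightarrow> real) set) \<Rightarrow> (nat \<Rightarrow> nat \<Rightarrow> real) set" where
  "blockprod I A = {z. (\<forall>i\<in>I. z i \<in> A i) \<and> (\<forall>i. i \<notin> I \<longrightarrow> z i = zvec)}"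

definition convex_blocks :: "(nat \<Rightarrow> nat \<Rightarrow> real) set \<Rightarrow> bool" where
  "convex_blocks Y \<longleftrightarrow> (\<forall>y\<in>Y. \<forall>y'\<in>Y. \<forall>t::real. 0 \<le> t \<and> t \<le> 1 \<longrightarrow>
      (\<lambda>i j. (1 - t) * y i j + t * y' i j) \<in> Y)"

definition nonpos :: "nat \<Rightarrow> (nat \<Rightarrow> real) \<Rightarrow> bool" where
  "nonpos q v \<longleftrightarrow> (\<forall>j<q. v j \<le> 0)"

definition feasP :: "nat \<Rightarrow> (nat \<Rightarrow> nat) \<Rightarrow> ((nat \<Rightarrow> nat \<Rightarrow> real) \<Rightarrow> (nat \<Rightarrow> real))
    \<Rightarrow> (nat \<Rightarrow> (nat \<Rightarrow> real) \<Rightarrow> (nat \<Rightarrow> real) \<Rightarrow> (nat \<Rightarrow> real)) \<Rightarrow> (nat \<Rightarrow> nat \<Rightarrow> real) \<Rightarrow> bool" where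
  "feasP N q g0 g x \<longleftrightarrow> nonpos (q 0) (g0 x) \<and> (\<forall>i\<in>{1..N}. nonpos (q i) (g i (x 0) (x i)))"

definition solves_P where
  "solves_P N q f g0 g X x \<longleftrightarrow> x \<in> X \<and> feasP N q g0 g x \<and>
     (\<forall>x'\<in>X. feasP N q g0 g x' \<longrightarrow> f x \<le> f x')"

text \<open>y_{-i} is represented as y with the i-th block replaced by zero.\<close>
definition ymin :: "(nat \<Rightarrow> nat \<Rightarrow> real) \<Rightarrow> nat \<Rightarrow> (nat \<Rightarrow> nat \<Rightarrow> real)" where
  "ymin y i = y(i := zvec)"

definition hmap :: "nat \<Rightarrow> (nat \<Rightarrow> (nat \<Rightarrow> real) \<Rightarrow> (nat \<Rightarrow> real) \<Rightarrow> (nat \<Rightarrow> nat \<Rightarrow> real) \<Rightarrow> (nat \<Rightarrow> real))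
    \<Rightarrow> (nat \<Rightarrow> nat \<Rightarrow> real) \<Rightarrow> (nat \<Rightarrow> nat \<Rightarrow> real) \<Rightarrow> (nat \<Rightarrow> nat \<Rightarrow> real)" where
  "hmap N h x y = (\<lambda>i. if i \<in> {1..N} then h i (x 0) (x i) (ymin y i) else zvec)"

definition feasMDO where
  "feasMDO N q g0 g h L X Y x y \<longleftrightarrow> x \<in> X \<and> y \<in> Y \<and> feasP N q g0 g (L x y) \<and>
     (\<forall>i\<in>{1..N}. y i = h i (x 0) (x i) (ymin y i))"

definition solves_MDO where
  "solves_MDO N q f g0 g h L X Y x y \<longleftrightarrow> feasMDO N q g0 g h L X Y x y \<and>
     (\<forall>x' y'. feasMDO N q g0 g h L X Y x' y' \<longrightarrow> f (L x y) \<le> f (L x' y'))"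

end

theory Submission
  imports Defs "HOL-Homology.Homology"
begin

lemma homotopic_canon_intro:
  fixes h :: "real \<times> 'a::topological_space \<Rightarrow> 'b::topological_space"
  assumes "continuous_on ({0..1} \<times> S) h" "h \<in> {0..1}\<times>S \<rightarrow> T" "\<forall>x\<in>S. h(0,x) = p x" "\<forall>x\<in>S. h(1,x) = q x"
  shows "homotopic_with (\<lambda>_. True) (top_of_set S) (top_of_set T) p q"
  apply (subst homotopic_with)
   apply simp
  apply (rule exI[of _ h])
  using assms by simp

lemma brouwer_ball_aux:
  fixes f :: "(nat \<Rightarrow> real) \<Rightarrow> (nat \<Rightarrow> real)" and m :: nat
  defines "D \<equiv> {x::nat\<Rightarrow>real. (\<forall>i>m. x i = 0) \<and> (\<Sum>i\<le>m. (x i)^2) \<le> 1}"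
  assumes cf: "continuous_on D f" and fD: "f ` D \<subseteq> D"
  shows "\<exists>x\<in>D. f x = x"
proof (rule ccontr)
  assume nf: "\<not> (\<exists>x\<in>D. f x = x)"
  define Sph where "Sph = {x::nat\<Rightarrow>real. (\<Sum>i\<le>m. (x i)^2) = 1 \<and> (\<forall>i>m. x i = 0)}"
  have nsph: "nsphere m = top_of_set Sph"
    by (simp add: nsphere Sph_def euclidean_product_topology)
  define nr where "nr x = sqrt (\<Sum>i\<le>m. (x i)^2)" for x :: "nat\<Rightarrow>real"
  define w where "w x = (\<lambda>i. x i - f x i)" for x
  define g where "g x = (\<lambda>i. w x i / nr (w x))" for x
  have SD: "Sph \<subseteq> D" by (auto simp: Sph_def D_def)
  have nr0: "nr v = 0 \<Longrightarrow> i \<le> m \<Longrightarrow> v i = 0" for v i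
  proof -
    assume "nr v = 0" "i \<le> m"
    then have "(\<Sum>i\<le>m. (v i)^2) = 0" by (simp add: nr_def)
    then have "\<forall>j\<in>{..m}. (v j)^2 = 0" by (subst sum_nonneg_eq_0_iff[symmetric]) auto
    then show "v i = 0" using \<open>i \<le> m\<close> by auto
  qed
  have nrge: "nr v \<ge> 0" for v by (simp add: nr_def sum_nonneg)
  have wpos: "nr (w x) > 0" if "x \<in> D" for x
  proof (rule ccontr)
    assume "\<not> nr (w x) > 0"
    then have "nr (w x) = 0" using nrge[of "w x"] by linarith
    then have "\<forall>i\<le>m. w x i = 0" using nr0 by blast
    moreover have "f x \<in> D" using fD that by auto
    ultimately have "f x = x"
    proof (intro ext)
      fix i
      assume a: "\<forall>i\<le>m. w x i = 0" "f x \<in> D"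
      show "f x i = x i"
      proof (cases "i \<le> m")
        case True then show ?thesis using a by (simp add: w_def)
      next
        case False then show ?thesis using a that by (simp add: D_def)
      qed
    qed
    then show False using nf that by auto
  qed
  have gS: "g x \<in> Sph" if "x \<in> D" for x
  proof -
    have fx: "f x \<in> D" using fD that by auto
    have r: "nr (w x) > 0" using wpos that .
    have "(\<Sum>i\<le>m. (g x i)^2) = (\<Sum>i\<le>m. (w x i)^2) / (nr (w x))^2"
      by (simp add: g_def power_divide sum_divide_distrib)
    also have "\<dots> = 1" using r by (simp add: nr_def sum_nonneg)
    finally show ?thesis using that fx by (auto simp: Sph_def g_def w_def D_def)
  qed
  have coord: "continuous_on S (\<lambda>x::nat\<Rightarrow>real. x i)" for S i
    by (rule continuous_on_product_then_coordinatewise[OF continuous_on_id])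
  have cw: "continuous_on D (\<lambda>x. w x i)" for i
    unfolding w_def by (rule continuous_on_diff[OF coord continuous_on_product_then_coordinatewise[OF cf]])
  have cnr: "continuous_on D (\<lambda>x. nr (w x))"
    unfolding nr_def by (intro continuous_on_real_sqrt continuous_on_sum continuous_on_power cw)
  have cg: "continuous_on D g"
    unfolding g_def
  proof (rule continuous_on_coordinatewise_then_product)
    fix i show "continuous_on D (\<lambda>x. w x i / nr (w x))"
      by (intro continuous_on_divide cw cnr) (use wpos in fastforce)
  qed
  have nrS: "x \<in> Sph \<Longrightarrow> nr x = 1" for x by (simp add: Sph_def nr_def)
  have cgi: "continuous_on ({0..1}\<times>Sph) (\<lambda>p. g (snd p) i)" for i
    by (rule continuous_on_compose2[OF continuous_on_product_then_coordinatewise[OF cg] continuous_on_snd])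
       (use SD in auto)
  have csi: "continuous_on T (\<lambda>p::real\<times>(nat\<Rightarrow>real). snd p i)" for T i
    by (rule continuous_on_compose2[OF coord continuous_on_snd]) auto
  define v where "v t x = (\<lambda>i. (1-t) * x i + t * g x i)" for t x
  have vnz: "nr (v t x) > 0" if t: "t\<in>{0..1}" and x: "x\<in>Sph" for t x
  proof (rule ccontr)
    assume "\<not> nr (v t x) > 0"
    then have "nr (v t x) = 0" using nrge[of "v t x"] by linarith
    then have v0: "\<forall>i\<le>m. v t x i = 0" using nr0 by blast
    have xD: "x \<in> D" using x SD by auto
    have fx: "f x \<in> D" using fD xD by auto
    have gx: "g x \<in> Sph" using gS xD .
    have r: "nr (w x) > 0" using wpos xD .
    show False
    proof (cases "t = 1")
      case True
      then have "\<forall>i\<le>m. g x i = 0" using v0 by (simp add: v_def)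
      then have "(\<Sum>i\<le>m. (g x i)^2) = 0" by simp
      then show False using gx by (simp add: Sph_def)
    next
      case False
      then have t1: "1 - t > 0" using t by auto
      have A: "(\<Sum>i\<le>m. v t x i * x i) = 0" using v0 by simp
      have sq: "(\<Sum>i\<le>m. (x i)^2) = 1" using x by (simp add: Sph_def)
      have sqf: "(\<Sum>i\<le>m. (f x i)^2) \<le> 1" using fx by (simp add: D_def)
      have "0 \<le> (\<Sum>i\<le>m. (f x i - x i)^2)" by (simp add: sum_nonneg)
      also have "\<dots> = (\<Sum>i\<le>m. (f x i)^2) + (\<Sum>i\<le>m. (x i)^2) - 2 * (\<Sum>i\<le>m. f x i * x i)"
        by (simp add: power2_diff sum.distrib sum_subtractf sum_distrib_left algebra_simps)
      finally have fxx: "(\<Sum>i\<le>m. f x i * x i) \<le> 1" using sq sqf by linarith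
      have C: "(\<Sum>i\<le>m. w x i * x i) \<ge> 0"
        using fxx sq by (simp add: w_def left_diff_distrib sum_subtractf power2_eq_square)
      have "(\<Sum>i\<le>m. v t x i * x i) = (\<Sum>i\<le>m. (1-t) * (x i)^2 + t * (g x i * x i))"
        by (rule sum.cong) (auto simp: v_def power2_eq_square algebra_simps)
      also have "\<dots> = (1-t) * (\<Sum>i\<le>m. (x i)^2) + t * (\<Sum>i\<le>m. g x i * x i)"
        by (simp add: sum.distrib sum_distrib_left)
      also have "\<dots> = (1-t) * (\<Sum>i\<le>m. (x i)^2) + t * ((\<Sum>i\<le>m. w x i * x i) / nr (w x))"
        by (simp add: g_def sum_divide_distrib)
      also have "\<dots> > 0"
      proof -
        have "(\<Sum>i\<le>m. w x i * x i) / nr (w x) \<ge> 0" using C r by simp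
        then have "t * ((\<Sum>i\<le>m. w x i * x i) / nr (w x)) \<ge> 0" using t by (intro mult_nonneg_nonneg) auto
        moreover have "(1-t) * (\<Sum>i\<le>m. (x i)^2) > 0" using t1 sq by simp
        ultimately show ?thesis by linarith
      qed
      finally show False using A by simp
    qed
  qed
  have hom1: "homotopic_with (\<lambda>_. True) (top_of_set Sph) (top_of_set Sph) id g"
  proof (rule homotopic_canon_intro)
    let ?h = "\<lambda>p. (\<lambda>i. v (fst p) (snd p) i / nr (v (fst p) (snd p)))"
    show "continuous_on ({0..1} \<times> Sph) ?h"
    proof (rule continuous_on_coordinatewise_then_product)
      fix i
      have cv: "continuous_on ({0..1} \<times> Sph) (\<lambda>p. v (fst p) (snd p) j)" for j
        unfolding v_def by (intro continuous_intros csi cgi)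
      have cn: "continuous_on ({0..1} \<times> Sph) (\<lambda>p. nr (v (fst p) (snd p)))"
        unfolding nr_def by (intro continuous_on_real_sqrt continuous_on_sum continuous_on_power cv)
      show "continuous_on ({0..1} \<times> Sph) (\<lambda>p. v (fst p) (snd p) i / nr (v (fst p) (snd p)))"
        by (intro continuous_on_divide cv cn) (use vnz in fastforce)
    qed
    show "?h \<in> {0..1} \<times> Sph \<rightarrow> Sph"
    proof
      fix p :: "real\<times>(nat\<Rightarrow>real)" assume p: "p \<in> {0..1} \<times> Sph"
      obtain t x where px: "p = (t,x)" "t \<in> {0..1}" "x \<in> Sph" using p by auto
      have r: "nr (v t x) > 0" using vnz px by auto
      have "(\<Sum>i\<le>m. (v t x i / nr (v t x))^2) = (\<Sum>i\<le>m. (v t x i)^2) / (nr (v t x))^2"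
        by (simp add: power_divide sum_divide_distrib)
      also have "\<dots> = 1" using r by (simp add: nr_def sum_nonneg)
      finally show "?h p \<in> Sph" using px gS[of x] SD
        by (auto simp: Sph_def v_def)
    qed
    show "\<forall>x\<in>Sph. ?h (0, x) = id x"
      using nrS by (auto simp: v_def)
    show "\<forall>x\<in>Sph. ?h (1, x) = g x"
    proof
      fix x assume x: "x \<in> Sph"
      then have "g x \<in> Sph" using gS SD by auto
      then show "?h (1, x) = g x" using nrS by (simp add: v_def)
    qed
  qed
  have hom2: "homotopic_with (\<lambda>_. True) (top_of_set Sph) (top_of_set Sph) g (\<lambda>_. g (\<lambda>i. 0))"
  proof (rule homotopic_canon_intro)
    let ?k = "\<lambda>p::real\<times>(nat\<Rightarrow>real). (\<lambda>i. (1 - fst p) * snd p i)"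
    have kD: "?k \<in> {0..1} \<times> Sph \<rightarrow> D"
    proof
      fix p :: "real\<times>(nat\<Rightarrow>real)" assume p: "p \<in> {0..1} \<times> Sph"
      obtain t x where px: "p = (t,x)" "t \<in> {0..1}" "x \<in> Sph" using p by auto
      have "(\<Sum>i\<le>m. ((1-t) * x i)^2) = (1-t)^2 * (\<Sum>i\<le>m. (x i)^2)"
        by (simp add: power_mult_distrib sum_distrib_left)
      also have "\<dots> = (1-t)^2" using px by (simp add: Sph_def)
      also have "\<dots> \<le> 1" using px by (simp add: power_le_one abs_le_iff)
      finally show "?k p \<in> D" using px by (auto simp: D_def Sph_def)
    qed
    have ck: "continuous_on ({0..1} \<times> Sph) ?k"
      by (intro continuous_on_coordinatewise_then_product continuous_intros csi)
    show "continuous_on ({0..1} \<times> Sph) (g \<circ> ?k)"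
      by (rule continuous_on_compose[OF ck continuous_on_subset[OF cg]]) (use kD in auto)
    show "g \<circ> ?k \<in> {0..1} \<times> Sph \<rightarrow> Sph" using kD gS by (force simp: Pi_iff)
    show "\<forall>x\<in>Sph. (g \<circ> ?k) (0, x) = g x" by simp
    show "\<forall>x\<in>Sph. (g \<circ> ?k) (1, x) = g (\<lambda>i. 0)" by simp
  qed
  have "contractible_space (nsphere m)"
    unfolding nsph contractible_space_def
    by (rule exI[of _ "g (\<lambda>i. 0)"]) (rule homotopic_with_trans[OF hom1 hom2])
  then show False using non_contractible_space_nsphere[of m] by simp
qed

lemma var_ineq:
  fixes K :: "(nat \<Rightarrow> real) set"
  assumes conv: "\<forall>x\<in>K. \<forall>y\<in>K. \<forall>t::real. 0 \<le> t \<and> t \<le> 1 \<longrightarrow> (\<lambda>i. (1 - t) * x i + t * y i) \<in> K"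
    and pK: "p \<in> K" and kK: "k \<in> K"
    and mn: "\<forall>q\<in>K. (\<Sum>i\<le>m. (z i - p i)^2) \<le> (\<Sum>i\<le>m. (z i - q i)^2)"
  shows "(\<Sum>i\<le>m. (z i - p i) * (k i - p i)) \<le> 0"
proof (rule ccontr)
  define a where "a = (\<Sum>i\<le>m. (z i - p i) * (k i - p i))"
  define B where "B = (\<Sum>i\<le>m. (k i - p i)^2)"
  assume "\<not> (\<Sum>i\<le>m. (z i - p i) * (k i - p i)) \<le> 0"
  then have apos: "a > 0" by (simp add: a_def)
  have B0: "B \<ge> 0" by (simp add: B_def sum_nonneg)
  have key: "2 * t * a \<le> t^2 * B" if t: "0 \<le> t" "t \<le> 1" for t
  proof -
    have qK: "(\<lambda>i. (1 - t) * p i + t * k i) \<in> K" using conv pK kK t by blast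
    have e: "(z i - ((1 - t) * p i + t * k i))^2 = (z i - p i)^2 - 2*t*((z i - p i)*(k i - p i)) + t^2 * (k i - p i)^2" for i
      by (simp add: power2_eq_square algebra_simps)
    have "(\<Sum>i\<le>m. (z i - ((1 - t) * p i + t * k i))^2) = (\<Sum>i\<le>m. (z i - p i)^2) - 2*t*a + t^2 * B"
      unfolding e a_def B_def by (simp add: sum.distrib sum_subtractf sum_distrib_left mult.assoc)
    moreover have "(\<Sum>i\<le>m. (z i - p i)^2) \<le> (\<Sum>i\<le>m. (z i - ((1 - t) * p i + t * k i))^2)"
      using bspec[OF mn qK] by simp
    ultimately show ?thesis by linarith
  qed
  show False
  proof (cases "B = 0")
    case True
    then show False using key[of 1] apos by simp
  next
    case False
    then have Bp: "B > 0" using B0 by simp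
    define t where "t = min 1 (a / B)"
    have t0: "t > 0" "t \<le> 1" using apos Bp by (auto simp: t_def)
    have "2 * t * a \<le> t^2 * B" using key t0 by simp
    then have "2 * a \<le> t * B" using t0 by (simp add: power2_eq_square mult.assoc)
    also have "t * B \<le> (a / B) * B" using Bp by (intro mult_right_mono) (auto simp: t_def)
    also have "\<dots> = a" using Bp by simp
    finally show False using apos by simp
  qed
qed

lemma nonexp:
  fixes K :: "(nat \<Rightarrow> real) set"
  assumes conv: "\<forall>x\<in>K. \<forall>y\<in>K. \<forall>t::real. 0 \<le> t \<and> t \<le> 1 \<longrightarrow> (\<lambda>i. (1 - t) * x i + t * y i) \<in> K"
    and pK: "p \<in> K" and qK: "q \<in> K"
    and mp: "\<forall>k\<in>K. (\<Sum>i\<le>m. (z i - p i)^2) \<le> (\<Sum>i\<le>m. (z i - k i)^2)"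
    and mq: "\<forall>k\<in>K. (\<Sum>i\<le>m. (y i - q i)^2) \<le> (\<Sum>i\<le>m. (y i - k i)^2)"
  shows "(\<Sum>i\<le>m. (p i - q i)^2) \<le> (\<Sum>i\<le>m. (z i - y i)^2)"
proof -
  have 1: "(\<Sum>i\<le>m. (z i - p i) * (q i - p i)) \<le> 0" by (rule var_ineq[OF conv pK qK mp])
  have 2: "(\<Sum>i\<le>m. (y i - q i) * (p i - q i)) \<le> 0" by (rule var_ineq[OF conv qK pK mq])
  define d where "d i = p i - q i" for i
  define e where "e i = z i - y i" for i
  have "(\<Sum>i\<le>m. (z i - p i) * (q i - p i)) + (\<Sum>i\<le>m. (y i - q i) * (p i - q i))
        = (\<Sum>i\<le>m. (d i)^2) - (\<Sum>i\<le>m. e i * d i)"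
    unfolding d_def e_def sum.distrib[symmetric] sum_subtractf[symmetric]
    by (rule sum.cong) (auto simp: power2_eq_square algebra_simps)
  then have A: "(\<Sum>i\<le>m. (d i)^2) \<le> (\<Sum>i\<le>m. e i * d i)" using 1 2 by linarith
  have "0 \<le> (\<Sum>i\<le>m. (e i - d i)^2)" by (simp add: sum_nonneg)
  also have "\<dots> = (\<Sum>i\<le>m. (e i)^2) - 2 * (\<Sum>i\<le>m. e i * d i) + (\<Sum>i\<le>m. (d i)^2)"
    unfolding sum_distrib_left sum.distrib[symmetric] sum_subtractf[symmetric]
    by (rule sum.cong) (auto simp: power2_eq_square algebra_simps)
  finally have "(\<Sum>i\<le>m. (d i)^2) \<le> (\<Sum>i\<le>m. (e i)^2)" using A by linarith
  then show ?thesis by (simp add: d_def e_def)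
qed

lemma brouwer_V:
  fixes K :: "(nat \<Rightarrow> real) set" and f :: "(nat \<Rightarrow> real) \<Rightarrow> (nat \<Rightarrow> real)" and m :: nat
  assumes cK: "compact K" and ne: "K \<noteq> {}"
    and conv: "\<forall>x\<in>K. \<forall>y\<in>K. \<forall>t::real. 0 \<le> t \<and> t \<le> 1 \<longrightarrow> (\<lambda>i. (1 - t) * x i + t * y i) \<in> K"
    and supp: "\<forall>x\<in>K. \<forall>i>m. x i = 0"
    and cf: "continuous_on K f" and fK: "f ` K \<subseteq> K"
  shows "\<exists>x\<in>K. f x = x"
proof -
  define q where "q x = (\<Sum>i\<le>m. (x i)^2)" for x :: "nat\<Rightarrow>real"
  have coord: "continuous_on S (\<lambda>x::nat\<Rightarrow>real. x i)" for S i
    by (rule continuous_on_product_then_coordinatewise[OF continuous_on_id])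
  have cq: "continuous_on K q" unfolding q_def
    by (intro continuous_on_sum continuous_on_power coord)
  obtain x0 where x0: "x0 \<in> K" "\<forall>x\<in>K. q x \<le> q x0"
    using continuous_attains_sup[OF cK ne cq] by blast
  define s where "s = sqrt (q x0 + 1)"
  have q0: "q x \<ge> 0" for x by (simp add: q_def sum_nonneg)
  have spos: "s > 0" using q0[of x0] by (simp add: s_def)
  have s2: "s^2 = q x0 + 1" using q0[of x0] by (simp add: s_def)
  define dd where "dd z p = (\<Sum>i\<le>m. (z i - p i)^2)" for z p :: "nat\<Rightarrow>real"
  have cdd: "continuous_on S (\<lambda>p. dd z p)" for S z
    unfolding dd_def by (intro continuous_on_sum continuous_on_power continuous_on_diff continuous_on_const coord)
  have cdd2: "continuous_on S (\<lambda>p. dd p z)" for S z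
    unfolding dd_def by (intro continuous_on_sum continuous_on_power continuous_on_diff continuous_on_const coord)
  have ex: "\<exists>p. p \<in> K \<and> (\<forall>k\<in>K. dd z p \<le> dd z k)" for z
    using continuous_attains_inf[OF cK ne cdd] by blast
  define cp where "cp z = (SOME p. p \<in> K \<and> (\<forall>k\<in>K. dd z p \<le> dd z k))" for z
  have cpK: "cp z \<in> K" and cpmin: "\<forall>k\<in>K. dd z (cp z) \<le> dd z k" for z
    using someI_ex[OF ex[of z]] by (auto simp: cp_def)
  have cpid: "cp z = z" if zK: "z \<in> K" for z
  proof (rule ext)
    fix i
    have "dd z (cp z) \<le> 0" using cpmin[of z] zK by (force simp: dd_def)
    then have "(\<Sum>j\<le>m. (z j - cp z j)^2) = 0" unfolding dd_def
      by (simp add: order_antisym sum_nonneg)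
    then have "\<forall>j\<in>{..m}. (z j - cp z j)^2 = 0" by (subst sum_nonneg_eq_0_iff[symmetric]) auto
    then show "cp z i = z i"
    proof (cases "i \<le> m")
      case False
      then have "i > m" by simp
      then have "cp z i = 0" "z i = 0" using supp cpK[of z] zK by blast+
      then show ?thesis by simp
    qed auto
  qed
  have cpne: "(cp z i - cp y i)^2 \<le> dd z y" if "i \<le> m" for z y i
  proof -
    have "(cp z i - cp y i)^2 \<le> (\<Sum>j\<le>m. (cp z j - cp y j)^2)"
      using that by (intro member_le_sum) auto
    also have "\<dots> \<le> dd z y" unfolding dd_def
      by (rule nonexp[OF conv cpK cpK]) (use cpmin in \<open>auto simp: dd_def\<close>)
    finally show ?thesis .
  qed
  have ccpi: "continuous_on UNIV (\<lambda>z. cp z i)" for i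
  proof (cases "i \<le> m")
    case False
    then have "(\<lambda>z. cp z i) = (\<lambda>z. 0)" using supp cpK by (intro ext) auto
    then show ?thesis using continuous_on_const by metis
  next
    case True
    show ?thesis unfolding continuous_on_def
    proof
      fix z0 :: "nat \<Rightarrow> real"
      have "((\<lambda>z. sqrt (dd z z0)) \<longlongrightarrow> sqrt (dd z0 z0)) (at z0 within UNIV)"
        using continuous_on_real_sqrt[OF cdd2[of UNIV z0]] unfolding continuous_on_def by blast
      then have l: "((\<lambda>z. sqrt (dd z z0)) \<longlongrightarrow> 0) (at z0 within UNIV)" by (simp add: dd_def)
      have "((\<lambda>z. cp z i - cp z0 i) \<longlongrightarrow> 0) (at z0 within UNIV)"
      proof (rule Lim_null_comparison[OF always_eventually l], rule allI)
        fix z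
        have "norm (cp z i - cp z0 i) = sqrt ((cp z i - cp z0 i)^2)" by simp
        also have "\<dots> \<le> sqrt (dd z z0)" using real_sqrt_le_mono[OF cpne[OF True, of z z0]] by simp
        finally show "norm (cp z i - cp z0 i) \<le> sqrt (dd z z0)" .
      qed
      then show "((\<lambda>z. cp z i) \<longlongrightarrow> cp z0 i) (at z0 within UNIV)" by (rule LIM_zero_cancel)
    qed
  qed
  have ccp: "continuous_on UNIV cp"
    by (rule continuous_on_coordinatewise_then_product) (rule ccpi)
  define sc where "sc u = (\<lambda>j. s * u j)" for u :: "nat \<Rightarrow> real"
  have csc: "continuous_on UNIV sc" unfolding sc_def
    by (intro continuous_on_coordinatewise_then_product continuous_on_mult continuous_on_const coord)
  have cfc: "continuous_on UNIV (\<lambda>u. f (cp (sc u)))"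
  proof -
    have "continuous_on UNIV (cp \<circ> sc)" by (rule continuous_on_compose[OF csc continuous_on_subset[OF ccp]]) auto
    then have "continuous_on UNIV (f \<circ> (cp \<circ> sc))"
      by (rule continuous_on_compose[OF _ continuous_on_subset[OF cf]]) (auto simp: cpK)
    then show ?thesis by (simp add: o_def)
  qed
  define F where "F u = (\<lambda>i. f (cp (sc u)) i / s)" for u
  define D where "D = {x::nat\<Rightarrow>real. (\<forall>i>m. x i = 0) \<and> (\<Sum>i\<le>m. (x i)^2) \<le> 1}"
  have cFU: "continuous_on UNIV F" unfolding F_def
  proof (rule continuous_on_coordinatewise_then_product)
    fix i
    show "continuous_on UNIV (\<lambda>u. f (cp (sc u)) i / s)"
      by (rule continuous_on_divide[OF continuous_on_product_then_coordinatewise[OF cfc] continuous_on_const])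
         (use spos in auto)
  qed
  have cF: "continuous_on D F" by (rule continuous_on_subset[OF cFU]) auto
  have FD: "F ` D \<subseteq> D"
  proof
    fix y assume "y \<in> F ` D"
    then obtain u where y: "y = F u" by auto
    have yK: "f (cp (sc u)) \<in> K" using fK cpK by auto
    have "(\<Sum>i\<le>m. (y i)^2) = q (f (cp (sc u))) / s^2"
      by (simp add: y F_def q_def power_divide sum_divide_distrib)
    also have "\<dots> \<le> 1"
    proof -
      have "q (f (cp (sc u))) \<le> q x0" using x0 yK by blast
      then show ?thesis using s2 q0[of x0] by simp
    qed
    finally show "y \<in> D" using supp yK by (simp add: D_def y F_def)
  qed
  obtain u where uD: "u \<in> D" and Fu: "F u = u"
    using brouwer_ball_aux[of m F] cF FD unfolding D_def by blast
  have fz: "f (cp (sc u)) = sc u"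
  proof (rule ext)
    fix i
    have "f (cp (sc u)) i / s = u i" using fun_cong[OF Fu, of i] by (simp add: F_def)
    then show "f (cp (sc u)) i = sc u i" using spos by (simp add: sc_def field_simps)
  qed
  have zK: "sc u \<in> K" using fz fK cpK by (metis image_subset_iff)
  show ?thesis using fz cpid[OF zK] zK by auto
qed


lemma brouwer_W:
  fixes Y :: "(nat \<Rightarrow> nat \<Rightarrow> real) set" and F and N M :: nat
  assumes cY: "compact Y" and ne: "Y \<noteq> {}" and conv: "convex_blocks Y"
    and supp: "\<forall>y\<in>Y. \<forall>i j. (i > N \<or> j \<ge> M) \<longrightarrow> y i j = 0" and M: "M > 0"
    and cF: "continuous_on Y F" and FY: "F ` Y \<subseteq> Y"
  shows "\<exists>y\<in>Y. F y = y"
proof -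
  define \<phi> where "\<phi> y = (\<lambda>k. y (k div M) (k mod M))" for y :: "nat \<Rightarrow> nat \<Rightarrow> real"
  define \<psi> where "\<psi> v = (\<lambda>i j. if j < M then v (i*M+j) else 0)" for v :: "nat \<Rightarrow> real"
  have \<psi>\<phi>: "\<psi> (\<phi> y) = y" if "y \<in> Y" for y
  proof (intro ext)
    fix i j
    show "\<psi> (\<phi> y) i j = y i j"
    proof (cases "j < M")
      case True then show ?thesis using M by (simp add: \<psi>_def \<phi>_def)
    next
      case False then show ?thesis using supp that by (simp add: \<psi>_def)
    qed
  qed
  have c1: "continuous_on S (\<lambda>y::nat\<Rightarrow>nat\<Rightarrow>real. y a b)" for S a b
    by (rule continuous_on_product_then_coordinatewise[OF continuous_on_product_then_coordinatewise[OF continuous_on_id]])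
  have c2: "continuous_on S (\<lambda>v::nat\<Rightarrow>real. v a)" for S a
    by (rule continuous_on_product_then_coordinatewise[OF continuous_on_id])
  have c\<phi>: "continuous_on UNIV \<phi>" unfolding \<phi>_def
    by (rule continuous_on_coordinatewise_then_product) (rule c1)
  have c\<psi>: "continuous_on UNIV \<psi>" unfolding \<psi>_def
  proof (intro continuous_on_coordinatewise_then_product)
    fix i j
    show "continuous_on UNIV (\<lambda>v::nat\<Rightarrow>real. if j < M then v (i * M + j) else 0)"
      by (cases "j < M") (simp_all add: c2)
  qed
  define K where "K = \<phi> ` Y"
  have cK: "compact K" unfolding K_def
    by (rule compact_continuous_image[OF continuous_on_subset[OF c\<phi>] cY]) auto
  have neK: "K \<noteq> {}" using ne by (simp add: K_def)
  have convK: "\<forall>x\<in>K. \<forall>y\<in>K. \<forall>t::real. 0 \<le> t \<and> t \<le> 1 \<longrightarrow> (\<lambda>i. (1 - t) * x i + t * y i) \<in> K"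
  proof (intro ballI allI impI)
    fix a b t assume a: "a \<in> K" and b: "b \<in> K" and t: "0 \<le> t \<and> t \<le> (1::real)"
    obtain y where y: "y \<in> Y" "a = \<phi> y" using a by (auto simp: K_def)
    obtain y' where y': "y' \<in> Y" "b = \<phi> y'" using b by (auto simp: K_def)
    have "(\<lambda>i j. (1 - t) * y i j + t * y' i j) \<in> Y"
      using conv y y' t unfolding convex_blocks_def by blast
    moreover have "(\<lambda>i. (1 - t) * a i + t * b i) = \<phi> (\<lambda>i j. (1 - t) * y i j + t * y' i j)"
      using y y' by (simp add: \<phi>_def)
    ultimately show "(\<lambda>i. (1 - t) * a i + t * b i) \<in> K" by (simp add: K_def)
  qed
  have suppK: "\<forall>x\<in>K. \<forall>i>(Suc N)*M. x i = 0"
  proof (intro ballI allI impI)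
    fix a i assume a: "a \<in> K" and i: "i > Suc N * M"
    obtain y where y: "y \<in> Y" "a = \<phi> y" using a by (auto simp: K_def)
    have "Suc N * M div M \<le> i div M" using i by (intro div_le_mono) simp
    then have "i div M > N" using M by simp
    then show "a i = 0" using y supp by (simp add: \<phi>_def)
  qed
  define f where "f v = \<phi> (F (\<psi> v))" for v
  have \<psi>K: "\<psi> ` K \<subseteq> Y" using \<psi>\<phi> by (auto simp: K_def)
  have cf: "continuous_on K f"
  proof -
    have "continuous_on K (F \<circ> \<psi>)"
      by (rule continuous_on_compose[OF continuous_on_subset[OF c\<psi>] continuous_on_subset[OF cF]]) (use \<psi>K in auto)
    then have "continuous_on K (\<phi> \<circ> (F \<circ> \<psi>))"
      by (rule continuous_on_compose[OF _ continuous_on_subset[OF c\<phi>]]) auto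
    then show ?thesis by (simp add: f_def o_def)
  qed
  have fK: "f ` K \<subseteq> K"
  proof
    fix b assume "b \<in> f ` K"
    then obtain y where y: "y \<in> Y" "b = f (\<phi> y)" by (auto simp: K_def)
    then have "b = \<phi> (F y)" by (simp add: f_def \<psi>\<phi>)
    then show "b \<in> K" using FY y by (auto simp: K_def)
  qed
  obtain v where v: "v \<in> K" "f v = v" using brouwer_V[OF cK neK convK suppK cf fK] by blast
  obtain y where y: "y \<in> Y" "v = \<phi> y" using v by (auto simp: K_def)
  have "\<phi> (F y) = \<phi> y" using v y by (simp add: f_def \<psi>\<phi>)
  then have "\<psi> (\<phi> (F y)) = \<psi> (\<phi> y)" by simp
  then have "F y = y" using \<psi>\<phi> y FY by auto
  then show ?thesis using y by blast
qed

theorem proposition2: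
  fixes N :: nat and dd pp q :: "nat \<Rightarrow> nat"
    and Xs Ys :: "nat \<Rightarrow> (nat \<Rightarrow> real) set"
    and f :: "(nat \<Rightarrow> nat \<Rightarrow> real) \<Rightarrow> real"
    and g0 :: "(nat \<Rightarrow> nat \<Rightarrow> real) \<Rightarrow> (nat \<Rightarrow> real)"
    and g :: "nat \<Rightarrow> (nat \<Rightarrow> real) \<Rightarrow> (nat \<Rightarrow> real) \<Rightarrow> (nat \<Rightarrow> real)"
    and h :: "nat \<Rightarrow> (nat \<Rightarrow> real) \<Rightarrow> (nat \<Rightarrow> real) \<Rightarrow> (nat \<Rightarrow> nat \<Rightarrow> real) \<Rightarrow> (nat \<Rightarrow> real)"
    and L :: "(nat \<Rightarrow> nat \<Rightarrow> real) \<Rightarrow> (nat \<Rightarrow> nat \<Rightarrow> real) \<Rightarrow> (nat \<Rightarrow> nat \<Rightarrow> real)"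
  defines "X \<equiv> blockprod {0..N} Xs"
    and "Y \<equiv> blockprod {1..N} Ys"
    and "S \<equiv> {(x, y). x \<in> blockprod {0..N} Xs \<and> y \<in> blockprod {1..N} Ys \<and> y = hmap N h x y}"
  assumes N: "N \<ge> 2"
    and dims: "\<forall>i\<in>{0..N}. dd i \<ge> 1" "\<forall>i\<in>{1..N}. pp i \<ge> 1" "\<forall>i\<in>{0..N}. q i \<ge> 1"
    and Xsub: "\<forall>i\<in>{0..N}. Xs i \<subseteq> Rn (dd i)"
    and Ysub: "\<forall>i\<in>{1..N}. Ys i \<subseteq> Rn (pp i)"
    and Yconv: "convex_blocks Y"
    and Ycomp: "compact Y"
    and h_range: "\<forall>i\<in>{1..N}. \<forall>x\<in>X. \<forall>y\<in>Y. h i (x 0) (x i) (ymin y i) \<in> Ys i"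
    and h_cont: "\<forall>x\<in>X. continuous_on Y (hmap N h x)"
    and L_range: "\<forall>x\<in>X. \<forall>y\<in>Y. L x y \<in> blockprod {0..N} (\<lambda>i. Rn (dd i))"
    and L_S: "\<forall>(x, y)\<in>S. L x y = x"
  shows "\<forall>x\<in>X. \<forall>y\<in>Y.
           solves_MDO N q f g0 g h L X Y x y \<longleftrightarrow> (x, y) \<in> S \<and> solves_P N q f g0 g X x"
  proof (intro ballI)
  fix x y assume xX: "x \<in> X" and yY: "y \<in> Y"
  have Ydef: "blockprod {1..N} Ys = Y" by (simp add: Y_def)
  have Xdef: "blockprod {0..N} Xs = X" by (simp add: X_def)
  have Sdef: "S = {(x, y). x \<in> X \<and> y \<in> Y \<and> y = hmap N h x y}"
    unfolding S_def X_def Y_def by (rule refl)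
  have Yout: "y' i = zvec" if "y' \<in> Y" "i \<notin> {1..N}" for y' i
    using that by (simp add: Y_def blockprod_def)
  have hmapY: "hmap N h x' y' \<in> Y" if "x' \<in> X" "y' \<in> Y" for x' y'
  proof -
    have "\<forall>i\<in>{1..N}. hmap N h x' y' i \<in> Ys i"
    proof
      fix i assume i: "i \<in> {1..N}"
      show "hmap N h x' y' i \<in> Ys i"
        using bspec[OF bspec[OF bspec[OF h_range i] that(1)] that(2)] i by (simp add: hmap_def)
    qed
    moreover have "\<forall>i. i \<notin> {1..N} \<longrightarrow> hmap N h x' y' i = zvec" by (simp add: hmap_def)
    ultimately show ?thesis unfolding Y_def blockprod_def by blast
  qed
  have feas_S: "feasMDO N q g0 g h L X Y x' y' \<longleftrightarrow> (x', y') \<in> S \<and> feasP N q g0 g x'" for x' y'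
  proof
    assume a: "feasMDO N q g0 g h L X Y x' y'"
    then have xy: "x' \<in> X" "y' \<in> Y" by (auto simp: feasMDO_def)
    have "y' = hmap N h x' y'"
    proof (rule ext)
      fix i show "y' i = hmap N h x' y' i"
        using a Yout[OF xy(2), of i] by (cases "i \<in> {1..N}") (auto simp: feasMDO_def hmap_def)
    qed
    then have S: "(x', y') \<in> S" using xy by (simp add: Sdef)
    then have "L x' y' = x'" using L_S by blast
    then show "(x', y') \<in> S \<and> feasP N q g0 g x'" using a S by (simp add: feasMDO_def)
  next
    assume a: "(x', y') \<in> S \<and> feasP N q g0 g x'"
    then have xy: "x' \<in> X" "y' \<in> Y" and fxp: "y' = hmap N h x' y'" by (auto simp: Sdef)
    have L: "L x' y' = x'" using L_S a by blast
    have "\<forall>i\<in>{1..N}. y' i = h i (x' 0) (x' i) (ymin y' i)"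
    proof
      fix i assume i: "i \<in> {1..N}"
      show "y' i = h i (x' 0) (x' i) (ymin y' i)"
        using fun_cong[OF fxp, of i] i by (simp add: hmap_def)
    qed
    then show "feasMDO N q g0 g h L X Y x' y'" using xy L a by (simp add: feasMDO_def)
  qed
  have exS: "\<exists>y'\<in>Y. (x', y') \<in> S" if x'X: "x' \<in> X" for x'
  proof -
    have supp: "\<forall>y\<in>Y. \<forall>i j. (i > N \<or> j \<ge> (\<Sum>k\<le>N. pp k) + 1) \<longrightarrow> y i j = 0"
    proof (intro ballI allI impI)
      fix y' i j assume y': "y' \<in> Y" and ij: "i > N \<or> j \<ge> (\<Sum>k\<le>N. pp k) + 1"
      show "y' i j = 0"
      proof (cases "i \<in> {1..N}")
        case False then show ?thesis using Yout[OF y' False] by (simp add: zvec_def)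
      next
        case True
        then have "pp i \<le> (\<Sum>k\<le>N. pp k)" by (intro member_le_sum) auto
        then have "j \<ge> pp i" using ij True by auto
        moreover have "y' i \<in> Ys i" using y' True by (simp add: Y_def blockprod_def)
        then have "y' i \<in> Rn (pp i)" using True Ysub by blast
        ultimately show ?thesis by (simp add: Rn_def)
      qed
    qed
    have ne: "Y \<noteq> {}" using yY by blast
    have im: "hmap N h x' ` Y \<subseteq> Y" using hmapY[OF x'X] by blast
    have "\<exists>y'\<in>Y. hmap N h x' y' = y'"
      by (rule brouwer_W[OF Ycomp ne Yconv supp _ bspec[OF h_cont x'X] im]) simp
    then obtain y' where "y' \<in> Y" "hmap N h x' y' = y'" by blast
    then show ?thesis using x'X unfolding Sdef by (metis (mono_tags, lifting) case_prodI mem_Collect_eq)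
  qed
  show "solves_MDO N q f g0 g h L X Y x y \<longleftrightarrow> (x, y) \<in> S \<and> solves_P N q f g0 g X x"
  proof
    assume a: "solves_MDO N q f g0 g h L X Y x y"
    then have S: "(x, y) \<in> S" and fP: "feasP N q g0 g x" using feas_S by (auto simp: solves_MDO_def)
    have L: "L x y = x" using L_S S by blast
    have "f x \<le> f x'" if xa: "x' \<in> X" "feasP N q g0 g x'" for x'
    proof -
      obtain y' where "y' \<in> Y" "(x', y') \<in> S" using exS[OF xa(1)] by blast
      then have fm: "feasMDO N q g0 g h L X Y x' y'" and Lx': "L x' y' = x'" using feas_S xa L_S by auto
      have "f (L x y) \<le> f (L x' y')" using a fm unfolding solves_MDO_def by blast
      then show ?thesis using L Lx' by simp
    qed
    then show "(x, y) \<in> S \<and> solves_P N q f g0 g X x" using S fP xX by (simp add: solves_P_def)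
  next
    assume a: "(x, y) \<in> S \<and> solves_P N q f g0 g X x"
    have L: "L x y = x" using L_S a by blast
    have "feasMDO N q g0 g h L X Y x y" using feas_S a by (simp add: solves_P_def)
    moreover have "f (L x y) \<le> f (L x' y')" if "feasMDO N q g0 g h L X Y x' y'" for x' y'
    proof -
      have "(x', y') \<in> S" "feasP N q g0 g x'" "x' \<in> X" using that feas_S by (auto simp: feasMDO_def)
      moreover then have "L x' y' = x'" using L_S by blast
      ultimately show ?thesis using a L by (auto simp: solves_P_def)
    qed
    ultimately show "solves_MDO N q f g0 g h L X Y x y" by (simp add: solves_MDO_def)
  qed
qed

end
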